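(* Let $a\ge 2$ be even and let $c$ be odd. If $0<c<\frac a2$, then $U=\{(a,-a),(c,-c)\}$ is avoidable. If $c=\frac a2$, then $U=\{(a,-a),(\frac a2,-\frac a2),(0,0)\}$ is avoidable.
   Context: The bicyclic inverse semigroup is $\mathcal{B}=\{(a,b)\in\mathbb{Z}\times\mathbb{Z}\mid a\ge 0,\ a+b\ge 0\}$ with multiplication $(a,b)(c,d)=(\max\{c+d,a\}-d,\ b+d)$. A subset $U\subseteq\mathcal{B}$ is called avoidable if $\mathcal{B}$ can be partitioned into two subsets $A$ and $B$ such that no element of $U$ can be written as a product $xy$ of two distinct elements $x\neq y$ both in $A$, or both in $B$. *)

theory Defs
  imports Main
begin

definition bicyclic :: "(int \<times> int) set" where
  "bicyclic = {(a, b). a \<ge> 0 \<and> a + b \<ge> 0}"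

fun bmult :: "int \<times> int \<Rightarrow> int \<times> int \<Rightarrow> int \<times> int" where
  "bmult (a, b) (c, d) = (max (c + d) a - d, b + d)"

definition avoidable :: "(int \<times> int) set \<Rightarrow> bool" where
  "avoidable U \<longleftrightarrow> U \<subseteq> bicyclic \<and>
     (\<exists>A B. A \<union> B = bicyclic \<and> A \<inter> B = {} \<and>
        (\<forall>x\<in>A. \<forall>y\<in>A. x \<noteq> y \<longrightarrow> bmult x y \<notin> U) \<and>
        (\<forall>x\<in>B. \<forall>y\<in>B. x \<noteq> y \<longrightarrow> bmult x y \<notin> U))"

end

theory Submission
  imports Defs
begin

lemma prod_char:
  assumes "(p1,q1) \<in> bicyclic" "(p2,q2) \<in> bicyclic" "bmult (p1,q1) (p2,q2) = (t,-t)"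
  shows "q1 = -p1 \<and> p2+q2 \<le> p1 \<and> t = p1 - q2"
  using assms by (auto simp: bicyclic_def max_def split: if_splits)

lemma avoid_by_col:
  fixes col :: "int \<times> int \<Rightarrow> bool"
  assumes "U \<subseteq> bicyclic"
  and "\<And>x y. x \<in> bicyclic \<Longrightarrow> y \<in> bicyclic \<Longrightarrow> x \<noteq> y \<Longrightarrow> bmult x y \<in> U \<Longrightarrow> col x \<noteq> col y"
  shows "avoidable U"
proof -
  let ?A = "{x\<in>bicyclic. col x}" and ?B = "{x\<in>bicyclic. \<not> col x}"
  have 1: "?A \<union> ?B = bicyclic" "?A \<inter> ?B = {}" by blast+
  have 2: "\<forall>x\<in>?A. \<forall>y\<in>?A. x \<noteq> y \<longrightarrow> bmult x y \<notin> U"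
    using assms(2) by blast
  have 3: "\<forall>x\<in>?B. \<forall>y\<in>?B. x \<noteq> y \<longrightarrow> bmult x y \<notin> U"
    using assms(2) by blast
  show ?thesis unfolding avoidable_def using assms(1) 1 2 3 by blast
qed

lemma odd_diff_parity:
  fixes d r :: int
  assumes "odd d" shows "even (d - r) \<longleftrightarrow> \<not> even r"
  using assms by auto

lemma case1:
  fixes a c :: int
  assumes "a \<ge> 2" and "even a" and "odd c" and "0 < c" and "2 * c < a"
  shows "avoidable {(a, -a), (c, -c)}"
proof -
  define d where "d = a - c"
  define h where "h = a div 2"
  have a2: "a = 2*h" using assms(2) h_def by auto
  have dpos: "d > 0" and dodd: "odd d" using assms d_def by auto
  have hd: "h < d" using assms a2 d_def by auto
  define P where "P j = even ((j - h) mod d)" for j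
  have per: "P (j + d) = P j" for j unfolding P_def
    by (metis add.commute add_diff_eq mod_add_self1)
  have row0: "P m \<noteq> P (t - m)" if "0 \<le> m" "0 \<le> t - m" "m \<noteq> t - m" "t = a \<or> t = c" for m t
  proof -
    have e: "(t - m - h) mod d = (-(m - h)) mod d"
    proof (cases "t = a")
      case True then show ?thesis using a2 by (simp add: algebra_simps)
    next
      case False
      then have "t - m - h = (-(m-h)) + (-1) * d" using that a2 d_def by auto
      then show ?thesis by (metis mod_mult_self1)
    qed
    show ?thesis
    proof (cases "(m - h) mod d = 0")
      case False
      then have "(t - m - h) mod d = d - (m - h) mod d" using e zmod_zminus1_eq_if[of "m-h" d] by simp
      then have "odd ((m - h) mod d + (t - m - h) mod d)" using dodd by simp
      then show ?thesis unfolding P_def by (auto simp: algebra_simps)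
    next
      case True
      then obtain k where k: "m - h = d * k" by (metis dvd_def mod_0_imp_dvd)
      from True e have "(t - m - h) mod d = 0" using zmod_zminus1_eq_if[of "m-h" d] by simp
      then obtain l where l: "t - m - h = d * l" by (metis dvd_def mod_0_imp_dvd)
      have "d * (k + l) = t - a" using k l a2 by (simp add: algebra_simps)
      then have "d * (k + l) = d * 0 \<or> d * (k+l) = d * (-1)" using that d_def by auto
      then have kl: "k + l = 0 \<or> k + l = -1" using dpos by (simp only: mult_cancel_left) simp
      have "k \<noteq> l"
      proof
        assume "k = l"
        then have "m - h = t - m - h" using k l by simp
        then show False using that(3) by simp
      qed
      then have "k \<le> -1 \<or> l \<le> -1" using kl by auto
      moreover have "d * k \<le> -d" if "k \<le> -1" for k :: int
        using mult_left_mono[OF that, of d] dpos by simp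
      ultimately have "d * k \<le> -d \<or> d * l \<le> -d" by blast
      then show ?thesis using k l that(1,2) hd by linarith
    qed
  qed
  define col where "col x = (if fst x + snd x = 0 then P (fst x) else \<not> P (snd x + a))" for x
  show ?thesis
  proof (rule avoid_by_col[where col = col])
    show "{(a, - a), (c, - c)} \<subseteq> bicyclic" using assms by (auto simp: bicyclic_def)
  next
    fix x y assume xb: "x \<in> bicyclic" and yb: "y \<in> bicyclic" and xy: "x \<noteq> y"
      and U: "bmult x y \<in> {(a, - a), (c, - c)}"
    obtain p1 q1 where x: "x = (p1,q1)" by force
    obtain p2 q2 where y: "y = (p2,q2)" by force
    obtain t where t: "t = a \<or> t = c" "bmult x y = (t, -t)" using U by auto
    have pc: "q1 = -p1 \<and> p2+q2 \<le> p1 \<and> t = p1 - q2"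
      using prod_char[of p1 q1 p2 q2 t] xb yb t x y by auto
    have cx: "col x = P p1" using pc x col_def by simp
    show "col x \<noteq> col y"
    proof (cases "p2 + q2 = 0")
      case True
      then have "p2 = t - p1" using pc by simp
      moreover have "col y = P p2" using y col_def True by simp
      ultimately have "col y = P (t - p1)" by simp
      moreover have "p1 \<noteq> t - p1" using xy x y pc True by auto
      moreover have "0 \<le> p1" using xb x by (simp add: bicyclic_def)
      moreover have "0 \<le> t - p1" using yb y True pc by (simp add: bicyclic_def)
      ultimately show ?thesis using cx row0 t by metis
    next
      case False
      then have "col y = (\<not> P (q2 + a))" using y col_def by simp
      moreover have "q2 + a = p1 + (a - t)" using pc by simp
      ultimately have "col y = (\<not> P (p1 + (a - t)))" by simp
      moreover have "P (p1 + (a - t)) = P p1"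
      proof (cases "t = a")
        case True then show ?thesis by simp
      next
        case False then have "a - t = d" using t(1) d_def by simp
        then show ?thesis using per[of p1] by simp
      qed
      ultimately show ?thesis using cx by simp
    qed
  qed
qed

lemma case2:
  fixes a c :: int
  assumes "a \<ge> 2" and "odd c" and "2 * c = a"
  shows "avoidable {(a, -a), (a div 2, -(a div 2)), (0, 0)}"
proof -
  have ca: "a div 2 = c" using assms by auto
  have cpos: "c > 0" using assms by auto
  define P where "P j = (j > 0 \<and> even (j mod c))" for j
  have per: "P (j + c) = P j" if "j > 0" for j unfolding P_def using that cpos by simp
  have row0: "P m \<noteq> P (t - m)" if "0 \<le> m" "0 \<le> t - m" "m \<noteq> t - m" "t = a \<or> t = c \<or> t = 0" for m t
  proof (cases "m = 0 \<or> t - m = 0")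
    case True
    then have "t = c \<or> t = 2 * c" using that assms by auto
    then show ?thesis using True cpos unfolding P_def by auto
  next
    case False
    then have mp: "m > 0" "t - m > 0" using that by auto
    have e: "(t - m) mod c = (- m) mod c"
    proof -
      have "c dvd t" using that assms by auto
      then obtain s where "t = c * s" by (auto simp: dvd_def)
      then have "t - m = -m + s * c" by simp
      then show ?thesis by (metis mod_mult_self1)
    qed
    show ?thesis
    proof (cases "m mod c = 0")
      case False
      then have "(t - m) mod c = c - m mod c" using e zmod_zminus1_eq_if[of m c] by simp
      then have "odd (m mod c + (t - m) mod c)" using assms by simp
      then show ?thesis unfolding P_def using mp by auto
    next
      case True
      then obtain k where k: "m = c * k" by (metis dvd_def mod_0_imp_dvd)
      from True e have "(t - m) mod c = 0" using zmod_zminus1_eq_if[of m c] by simp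
      then obtain l where l: "t - m = c * l" by (metis dvd_def mod_0_imp_dvd)
      have k1: "k \<ge> 1" using k mp cpos zero_less_mult_pos by fastforce
      have l1: "l \<ge> 1" using l mp cpos zero_less_mult_pos by fastforce
      have "c * (k + l) \<le> c * 2" using k l that assms by (auto simp: algebra_simps)
      then have "k + l \<le> 2" using cpos by simp
      then show ?thesis using k l k1 l1 that by auto
    qed
  qed
  define col where "col x = (if fst x + snd x = 0 then P (fst x) else \<not> P (snd x + a))" for x
  show ?thesis
  proof (rule avoid_by_col[where col = col])
    show "{(a, - a), (a div 2, - (a div 2)), (0, 0)} \<subseteq> bicyclic" using assms ca cpos
      by (auto simp: bicyclic_def)
  next
    fix x y assume xb: "x \<in> bicyclic" and yb: "y \<in> bicyclic" and xy: "x \<noteq> y"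
      and U: "bmult x y \<in> {(a, - a), (a div 2, - (a div 2)), (0, 0)}"
    obtain p1 q1 where x: "x = (p1,q1)" by force
    obtain p2 q2 where y: "y = (p2,q2)" by force
    obtain t where t: "t = a \<or> t = c \<or> t = 0" "bmult x y = (t, -t)" using U ca by auto
    have pc: "q1 = -p1 \<and> p2+q2 \<le> p1 \<and> t = p1 - q2"
      using prod_char[of p1 q1 p2 q2 t] xb yb t x y by auto
    have cx: "col x = P p1" using pc x col_def by simp
    show "col x \<noteq> col y"
    proof (cases "p2 + q2 = 0")
      case True
      then have "p2 = t - p1" using pc by simp
      moreover have "col y = P p2" using y col_def True by simp
      ultimately have "col y = P (t - p1)" by simp
      moreover have "p1 \<noteq> t - p1" using xy x y pc True by auto
      moreover have "0 \<le> p1" using xb x by (simp add: bicyclic_def)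
      moreover have "0 \<le> t - p1" using yb y True pc by (simp add: bicyclic_def)
      ultimately show ?thesis using cx row0 t by metis
    next
      case False
      then have "col y = (\<not> P (q2 + a))" using y col_def by simp
      moreover have "q2 + a = p1 + (a - t)" using pc by simp
      ultimately have "col y = (\<not> P (p1 + (a - t)))" by simp
      moreover have p1: "p1 > 0" using False pc yb y by (simp add: bicyclic_def)
      moreover have "P (p1 + (a - t)) = P p1"
      proof -
        have e1: "P (p1 + c) = P p1" using per p1 by simp
        have "P (p1 + c + c) = P (p1 + c)" using per[of "p1 + c"] p1 cpos by simp
        then have e2: "P (p1 + c + c) = P p1" using e1 by simp
        have "a - t = 0 \<or> a - t = c \<or> a - t = c + c" using t(1) assms by auto
        then show ?thesis
        proof (elim disjE)
          assume "a - t = c + c" then show ?thesis using e2 by (simp add: add.assoc)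
        qed (use e1 in simp_all)
      qed
      ultimately show ?thesis using cx by simp
    qed
  qed
qed

theorem proposition3p6:
  fixes a c :: int
  assumes "a \<ge> 2" and "even a" and "odd c"
  shows "(0 < c \<and> 2 * c < a \<longrightarrow> avoidable {(a, -a), (c, -c)}) \<and>
         (2 * c = a \<longrightarrow> avoidable {(a, -a), (a div 2, -(a div 2)), (0, 0)})"
  using case1[OF assms] case2[OF assms(1,3)] by blast

end
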